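(* Let $E\subseteq L$ be finite. If $E\models\bot$ then $\vec{\mathcal U}^E$ is empty, while if $E\not\models\bot$ then $\vec{\mathcal U}^E$ is full (so in either case $\vec{\mathcal U}^E\in\Upsilon$). In both cases $\preceq_E=\preceq_{\vec{\mathcal U}^E}$. Hence $\preceq_E$ is an E-relation.
   Context: $L$ is a propositional language built from a finite set of propositional variables with the connectives $\neg,\wedge,\vee,\rightarrow,\top,\bot$; $W$ is the finite set of propositional worlds. For $\theta\in L$, $S_\theta=\{w\in W\mid w\models\theta\}$; for $E\cup\{\phi\}\subseteq L$, $E\models\phi$ means $\bigcap_{\theta\in E}S_\theta\subseteq S_\phi$; $\models\phi$ means $\emptyset\models\phi$; a set $E$ is consistent iff $E\not\models\bot$. For $w\in W$, $\mathrm{sent}_E(w)=\{\theta\in E\mid w\models\theta\}$. Sequences: finite sequences $\vec{\mathcal U}=(\mathcal U_0,\ldots,\mathcal U_k)$ of mutually disjoint subsets of $W$ (components may be empty, possibly repeatedly). $\mathrm{rank}^{\vec{\mathcal U}}(\theta)$ is the least $i$ with $\mathcal U_i\cap S_\theta\neq\emptyset$, $\infty$ if none ($i<\infty$ for all integers $i$). $\theta\mid\!\sim_{\vec{\mathcal U}}\phi$ iff $\mathrm{rank}^{\vec{\mathcal U}}(\theta)<\mathrm{rank}^{\vec{\mathcal U}}(\theta\wedge\neg\phi)$ or $\mathrm{rank}^{\vec{\mathcal U}}(\theta)=\infty$. $\vec{\mathcal U}$ is full iff $\bigcup_i\mathcal U_i=W$, empty iff $\bigcup_i\mathcal U_i=\emptyset$;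 $\Upsilon$ is the set of sequences which are full or empty. For $\vec{\mathcal U}\in\Upsilon$, $\theta\preceq_{\vec{\mathcal U}}\phi$ iff (not $\neg\theta\vee\neg\phi\mid\!\sim_{\vec{\mathcal U}}\theta$) or $\neg\phi\mid\!\sim_{\vec{\mathcal U}}\bot$. E-relation: a relation $\preceq\subseteq L\times L$ such that for all $\theta,\phi,\psi$: (E1) $\theta\preceq\phi$ and $\phi\preceq\psi$ imply $\theta\preceq\psi$; (E2) $\theta\models\phi$ implies $\theta\preceq\phi$; (E3) $\theta\preceq\theta\wedge\phi$ or $\phi\preceq\theta\wedge\phi$; (E4) if $\bot\prec\psi$ for some $\psi$, then $\theta\preceq\phi$ for all $\theta$ implies $\models\phi$; here $\prec$ is the strict part of $\preceq$. Relation generated by a set: for $E\subseteq L$, define $\theta\prec_E\phi$ iff $E\not\models\bot$, $\not\models\theta$, and for every $E'\subseteq E$ such that $E'\cup\{\neg\phi\}$ is consistent there exists $E''\subseteq E$ with $|E'|<|E''|$ and $E''\cup\{\neg\theta\}$ consistent. The relation $\preceq_E$ is the relation with strict part $\prec_E$, i.e. $\theta\preceq_E\phi$ iff not $\phi\prec_E\theta$. For finite $E$ with $|E|=k$, set for $i=0,\ldots,k$: $\mathcal U^E_i=\{w\in W\mid |\mathrm{sent}_E(w)|=k-i\}$ if $E\not\models\bot$, and $\mathcal U^E_i=\emptyset$ otherwise; $\vec{\mathcal U}^E=(\mathcal U^E_0,\ldots,\mathcal U^E_k)$. *)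

theory Defs
  imports Main "HOL-Library.Extended_Nat"
begin

datatype 'v form = Var 'v | Neg "'v form" | Conj "'v form" "'v form"
  | Disj "'v form" "'v form" | Impl "'v form" "'v form" | Top | Bot

primrec sat :: "'v set \<Rightarrow> 'v form \<Rightarrow> bool" where
  "sat w (Var p) = (p \<in> w)"
| "sat w (Neg a) = (\<not> sat w a)"
| "sat w (Conj a b) = (sat w a \<and> sat w b)"
| "sat w (Disj a b) = (sat w a \<or> sat w b)"
| "sat w (Impl a b) = (sat w a \<longrightarrow> sat w b)"
| "sat w Top = True"
| "sat w Bot = False"

definition models_set :: "'v form \<Rightarrow> 'v set set" ("S") where
  "S \<theta> = {w. sat w \<theta>}"

definition entails :: "'v form set \<Rightarrow> 'v form \<Rightarrow> bool" where
  "entails E \<phi> \<longleftrightarrow> (\<Inter>\<theta>\<in>E. S \<theta>) \<subseteq> S \<phi>"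

definition valid :: "'v form \<Rightarrow> bool" where
  "valid \<phi> \<longleftrightarrow> entails {} \<phi>"

definition consistent :: "'v form set \<Rightarrow> bool" where
  "consistent E \<longleftrightarrow> \<not> entails E Bot"

definition sent :: "'v form set \<Rightarrow> 'v set \<Rightarrow> 'v form set" where
  "sent E w = {\<theta> \<in> E. sat w \<theta>}"

definition is_seq :: "'v set set list \<Rightarrow> bool" where
  "is_seq U \<longleftrightarrow> U \<noteq> [] \<and>
     (\<forall>i<length U. \<forall>j<length U. i \<noteq> j \<longrightarrow> U ! i \<inter> U ! j = {})"

definition rank :: "'v set set list \<Rightarrow> 'v form \<Rightarrow> enat" where
  "rank U \<theta> = (if \<exists>i<length U. U ! i \<inter> S \<theta> \<noteq> {}
     then enat (LEAST i. i < length U \<and> U ! i \<inter> S \<theta> \<noteq> {}) else \<infinity>)"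

definition nmc :: "'v set set list \<Rightarrow> 'v form \<Rightarrow> 'v form \<Rightarrow> bool" where
  "nmc U \<theta> \<phi> \<longleftrightarrow> rank U \<theta> < rank U (Conj \<theta> (Neg \<phi>)) \<or> rank U \<theta> = \<infinity>"

definition full_seq :: "'v set set list \<Rightarrow> bool" where
  "full_seq U \<longleftrightarrow> \<Union>(set U) = UNIV"

definition empty_seq :: "'v set set list \<Rightarrow> bool" where
  "empty_seq U \<longleftrightarrow> \<Union>(set U) = {}"

definition Upsilon :: "'v set set list set" where
  "Upsilon = {U. is_seq U \<and> (full_seq U \<or> empty_seq U)}"

definition pref_seq :: "'v set set list \<Rightarrow> 'v form \<Rightarrow> 'v form \<Rightarrow> bool" where
  "pref_seq U \<theta> \<phi> \<longleftrightarrow> \<not> nmc U (Disj (Neg \<theta>) (Neg \<phi>)) \<theta> \<or> nmc U (Neg \<phi>) Bot"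

definition strict :: "('a \<Rightarrow> 'a \<Rightarrow> bool) \<Rightarrow> 'a \<Rightarrow> 'a \<Rightarrow> bool" where
  "strict R x y \<longleftrightarrow> R x y \<and> \<not> R y x"

definition E_relation :: "('v form \<Rightarrow> 'v form \<Rightarrow> bool) \<Rightarrow> bool" where
  "E_relation R \<longleftrightarrow>
     (\<forall>\<theta> \<phi> \<psi>. R \<theta> \<phi> \<and> R \<phi> \<psi> \<longrightarrow> R \<theta> \<psi>) \<and>
     (\<forall>\<theta> \<phi>. entails {\<theta>} \<phi> \<longrightarrow> R \<theta> \<phi>) \<and>
     (\<forall>\<theta> \<phi>. R \<theta> (Conj \<theta> \<phi>) \<or> R \<phi> (Conj \<theta> \<phi>)) \<and>
     ((\<exists>\<psi>. strict R Bot \<psi>) \<longrightarrow> (\<forall>\<phi>. (\<forall>\<theta>. R \<theta> \<phi>) \<longrightarrow> valid \<phi>))"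

definition prec_gen :: "'v form set \<Rightarrow> 'v form \<Rightarrow> 'v form \<Rightarrow> bool" where
  "prec_gen E \<theta> \<phi> \<longleftrightarrow> consistent E \<and> \<not> valid \<theta> \<and>
     (\<forall>E' \<subseteq> E. consistent (E' \<union> {Neg \<phi>}) \<longrightarrow>
        (\<exists>E'' \<subseteq> E. card E' < card E'' \<and> consistent (E'' \<union> {Neg \<theta>})))"

definition pref_gen :: "'v form set \<Rightarrow> 'v form \<Rightarrow> 'v form \<Rightarrow> bool" where
  "pref_gen E \<theta> \<phi> \<longleftrightarrow> \<not> prec_gen E \<phi> \<theta>"

definition UE :: "'v form set \<Rightarrow> 'v set set list" where
  "UE E = map (\<lambda>i. if consistent E then {w. card (sent E w) = card E - i} else {})
            [0..<Suc (card E)]"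

end

theory Submission
  imports Defs
begin

definition idx :: "'v form set \<Rightarrow> 'v set \<Rightarrow> nat" where
  "idx E w = card E - card (sent E w)"

definition hr :: "'v form set \<Rightarrow> 'v form \<Rightarrow> enat" where
  "hr E \<psi> = Inf ((\<lambda>w. enat (idx E w)) ` S \<psi>)"

lemma S_simps:
  "S (Neg a) = - S a" "S (Conj a b) = S a \<inter> S b" "S (Disj a b) = S a \<union> S b"
  "S Top = UNIV" "S Bot = {}"
  by (auto simp: models_set_def)

lemma consistent_iff: "consistent X \<longleftrightarrow> (\<exists>w. \<forall>\<theta>\<in>X. sat w \<theta>)"
  unfolding consistent_def entails_def models_set_def by auto

lemma sent_card_le: "finite E \<Longrightarrow> card (sent E w) \<le> card E"
  by (rule card_mono) (auto simp: sent_def)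

lemma len_UE: "length (UE E) = Suc (card E)"
  by (simp add: UE_def)

lemma UE_nth: "i < Suc (card E) \<Longrightarrow>
   UE E ! i = (if consistent E then {w. card (sent E w) = card E - i} else {})"
  unfolding UE_def by (simp del: upt_Suc)

lemma mem_UE: "finite E \<Longrightarrow> consistent E \<Longrightarrow> i < Suc (card E) \<Longrightarrow>
   w \<in> UE E ! i \<longleftrightarrow> idx E w = i"
  using sent_card_le[of E w] by (auto simp: UE_nth idx_def)

lemma idx_le: "finite E \<Longrightarrow> idx E w < Suc (card E)"
  by (simp add: idx_def)

lemma rank_UE_incons: "\<not> consistent E \<Longrightarrow> rank (UE E) \<psi> = \<infinity>"
  by (auto simp: rank_def len_UE UE_nth)

lemma rank_UE_cons:
  assumes "finite E" "consistent E"
  shows "rank (UE E) \<psi> = hr E \<psi>"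
proof (cases "S \<psi> = {}")
  case True
  then have "\<not> (\<exists>i<length (UE E). UE E ! i \<inter> S \<psi> \<noteq> {})" by auto
  then show ?thesis using True by (simp add: rank_def hr_def top_enat_def)
next
  case False
  then obtain w0 where w0: "w0 \<in> S \<psi>" by auto
  have ex: "\<exists>i<length (UE E). UE E ! i \<inter> S \<psi> \<noteq> {}"
    using w0 mem_UE[OF assms idx_le[OF assms(1)], of w0] idx_le[OF assms(1), of w0]
    by (auto simp: len_UE)
  define P where "P i = (i < length (UE E) \<and> UE E ! i \<inter> S \<psi> \<noteq> {})" for i
  have P_iff: "P i \<longleftrightarrow> (\<exists>w\<in>S \<psi>. idx E w = i)" for i
    unfolding P_def using mem_UE[OF assms] idx_le[OF assms(1)] by (auto simp: len_UE)
  have exP: "\<exists>i. P i" using ex P_def by auto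
  have r: "rank (UE E) \<psi> = enat (LEAST i. P i)"
    using ex by (simp add: rank_def P_def)
  have "P (LEAST i. P i)" using exP by (rule LeastI_ex)
  then obtain wl where wl: "wl \<in> S \<psi>" "idx E wl = (LEAST i. P i)" using P_iff by auto
  have "hr E \<psi> \<le> enat (LEAST i. P i)"
    unfolding hr_def using wl by (metis INF_lower)
  moreover have "enat (LEAST i. P i) \<le> hr E \<psi>"
    unfolding hr_def
  proof (rule INF_greatest)
    fix w assume "w \<in> S \<psi>"
    then have "P (idx E w)" using P_iff by auto
    then show "enat (LEAST i. P i) \<le> enat (idx E w)" by (simp add: Least_le)
  qed
  ultimately show ?thesis using r by simp
qed

lemma finite_S: "finite (A :: ('v::finite) set set)"
  by simp

lemma inf_less:
  fixes g :: "'a \<Rightarrow> nat"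
  assumes "finite A" "finite B"
  defines "f \<equiv> (\<lambda>x. enat (g x))"
  shows "Inf (f ` A) < Inf (f ` B) \<longleftrightarrow> (\<exists>a\<in>A. \<forall>b\<in>B. f a < f b)"
proof
  assume H: "Inf (f ` A) < Inf (f ` B)"
  have "A \<noteq> {}" using H by auto
  then have "Inf (f ` A) \<in> f ` A"
    using assms(1) by (simp add: cInf_eq_Min)
  then obtain a where a: "a \<in> A" "Inf (f ` A) = f a" by auto
  show "\<exists>a\<in>A. \<forall>b\<in>B. f a < f b"
  proof (intro bexI[OF _ a(1)] ballI)
    fix b assume "b \<in> B"
    then have "Inf (f ` B) \<le> f b" by (simp add: INF_lower)
    then show "f a < f b" using H a by simp
  qed
next
  assume "\<exists>a\<in>A. \<forall>b\<in>B. f a < f b"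
  then obtain a where a: "a \<in> A" "\<forall>b\<in>B. f a < f b" by auto
  have "f a < Inf (f ` B)"
  proof (cases "B = {}")
    case True then show ?thesis using a by (simp add: top_enat_def f_def)
  next
    case False
    then have "Inf (f ` B) \<in> f ` B" using assms(2) by (simp add: cInf_eq_Min)
    then show ?thesis using a by auto
  qed
  moreover have "Inf (f ` A) \<le> f a" using a by (simp add: INF_lower)
  ultimately show "Inf (f ` A) < Inf (f ` B)" by simp
qed

lemma prec_gen_char:
  fixes E :: "('v::finite) form set"
  assumes "finite E"
  shows "prec_gen E \<phi> \<theta> \<longleftrightarrow> consistent E \<and>
     (\<exists>w. sat w (Neg \<phi>) \<and> (\<forall>w'. sat w' (Neg \<theta>) \<longrightarrow> card (sent E w') < card (sent E w)))"
proof
  assume H: "prec_gen E \<phi> \<theta>"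
  then have c: "consistent E" and nv: "\<not> valid \<phi>" by (auto simp: prec_gen_def)
  have ne: "{w. sat w (Neg \<phi>)} \<noteq> {}"
    using nv by (auto simp: valid_def entails_def models_set_def)
  define M where "M = Max ((\<lambda>w. card (sent E w)) ` {w. sat w (Neg \<phi>)})"
  have "M \<in> (\<lambda>w. card (sent E w)) ` {w. sat w (Neg \<phi>)}"
    unfolding M_def using ne by (intro Max_in) auto
  then obtain w0 where w0: "sat w0 (Neg \<phi>)" "card (sent E w0) = M" by auto
  have Mge: "sat w (Neg \<phi>) \<Longrightarrow> card (sent E w) \<le> M" for w
    unfolding M_def by (intro Max_ge) auto
  show "consistent E \<and>
     (\<exists>w. sat w (Neg \<phi>) \<and> (\<forall>w'. sat w' (Neg \<theta>) \<longrightarrow> card (sent E w') < card (sent E w)))"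
  proof (intro conjI c exI[of _ w0] allI impI w0(1))
    fix w' assume w': "sat w' (Neg \<theta>)"
    have sub: "sent E w' \<subseteq> E" by (auto simp: sent_def)
    have "consistent (sent E w' \<union> {Neg \<theta>})"
      unfolding consistent_iff using w' by (auto simp: sent_def)
    then obtain E'' where E'': "E'' \<subseteq> E" "card (sent E w') < card E''"
      "consistent (E'' \<union> {Neg \<phi>})"
      using H sub unfolding prec_gen_def by blast
    then obtain w'' where w'': "\<forall>t\<in>E'' \<union> {Neg \<phi>}. sat w'' t"
      unfolding consistent_iff by blast
    have "E'' \<subseteq> sent E w''" using w'' E''(1) by (auto simp: sent_def)
    then have "card E'' \<le> card (sent E w'')"
      using assms by (intro card_mono) (auto simp: sent_def intro: finite_subset)
    also have "\<dots> \<le> M" using w'' by (intro Mge) auto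
    finally show "card (sent E w') < card (sent E w0)" using E''(2) w0(2) by simp
  qed
next
  assume H: "consistent E \<and>
     (\<exists>w. sat w (Neg \<phi>) \<and> (\<forall>w'. sat w' (Neg \<theta>) \<longrightarrow> card (sent E w') < card (sent E w)))"
  then obtain w where w: "sat w (Neg \<phi>)"
     "\<forall>w'. sat w' (Neg \<theta>) \<longrightarrow> card (sent E w') < card (sent E w)" by blast
  have nv: "\<not> valid \<phi>" using w(1) by (auto simp: valid_def entails_def models_set_def)
  show "prec_gen E \<phi> \<theta>"
    unfolding prec_gen_def
  proof (intro conjI nv allI impI)
    show "consistent E" using H by simp
    fix E' assume E': "E' \<subseteq> E" "consistent (E' \<union> {Neg \<theta>})"
    then obtain w' where w': "\<forall>t\<in>E' \<union> {Neg \<theta>}. sat w' t"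
      unfolding consistent_iff by blast
    have "E' \<subseteq> sent E w'" using w' E'(1) by (auto simp: sent_def)
    then have "card E' \<le> card (sent E w')"
      using assms by (intro card_mono) (auto simp: sent_def intro: finite_subset)
    also have "\<dots> < card (sent E w)" using w(2) w' by auto
    finally have "card E' < card (sent E w)" .
    moreover have "consistent (sent E w \<union> {Neg \<phi>})"
      unfolding consistent_iff using w(1) by (auto simp: sent_def)
    ultimately show "\<exists>E''\<subseteq>E. card E' < card E'' \<and> consistent (E'' \<union> {Neg \<phi>})"
      by (intro exI[of _ "sent E w"]) (auto simp: sent_def)
  qed
qed

lemma prec_gen_hr:
  fixes E :: "('v::finite) form set"
  assumes "finite E"
  shows "prec_gen E \<phi> \<theta> \<longleftrightarrow> consistent E \<and> hr E (Neg \<phi>) < hr E (Neg \<theta>)"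
proof -
  have "hr E (Neg \<phi>) < hr E (Neg \<theta>) \<longleftrightarrow>
    (\<exists>w\<in>S (Neg \<phi>). \<forall>w'\<in>S (Neg \<theta>). enat (idx E w) < enat (idx E w'))"
    unfolding hr_def by (rule inf_less[unfolded]) auto
  also have "\<dots> \<longleftrightarrow> (\<exists>w. sat w (Neg \<phi>) \<and> (\<forall>w'. sat w' (Neg \<theta>) \<longrightarrow> card (sent E w') < card (sent E w)))"
    using sent_card_le[OF assms]
    by (simp add: idx_def models_set_def del: sat.simps) (meson diff_less_mono2 less_le_trans diff_less_mono2 le_less_trans not_le diff_le_mono2)
  finally show ?thesis using prec_gen_char[OF assms] by simp
qed

definition RR :: "'v form set \<Rightarrow> 'v form \<Rightarrow> 'v form \<Rightarrow> bool" where
  "RR E \<theta> \<phi> \<longleftrightarrow> \<not> consistent E \<or> hr E (Neg \<theta>) \<le> hr E (Neg \<phi>)"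

lemma hr_S: "S a = S b \<Longrightarrow> hr E a = hr E b"
  by (simp add: hr_def)

lemma hr_Disj: "hr E (Disj a b) = min (hr E a) (hr E b)"
  by (simp add: hr_def S_simps INF_union inf_min)

lemma pref_gen_RR:
  fixes E :: "('v::finite) form set"
  assumes "finite E"
  shows "pref_gen E = RR E"
  by (intro ext) (auto simp: pref_gen_def RR_def prec_gen_hr[OF assms] not_less)

lemma hr_inf: "hr E a = \<infinity> \<longleftrightarrow> S a = {}"
proof
  assume "S a = {}" then show "hr E a = \<infinity>" by (simp add: hr_def top_enat_def)
next
  assume "hr E a = \<infinity>"
  moreover have "w \<in> S a \<Longrightarrow> hr E a \<le> enat (idx E w)" for w
    unfolding hr_def by (rule INF_lower)
  ultimately show "S a = {}" by fastforce
qed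

lemma enat_aux: "(\<not> (min a b < a \<or> min a b = \<infinity>) \<or> b = (\<infinity>::enat)) \<longleftrightarrow> a \<le> b"
  by (cases a; cases b) (auto simp: min_def)

lemma pref_seq_RR:
  fixes E :: "('v::finite) form set"
  assumes "finite E"
  shows "pref_seq (UE E) = RR E"
proof (intro ext)
  fix \<theta> \<phi>
  show "pref_seq (UE E) \<theta> \<phi> = RR E \<theta> \<phi>"
  proof (cases "consistent E")
    case False
    then show ?thesis by (simp add: pref_seq_def nmc_def RR_def rank_UE_incons)
  next
    case True
    have e1: "hr E (Conj (Disj (Neg \<theta>) (Neg \<phi>)) (Neg \<theta>)) = hr E (Neg \<theta>)"
      by (rule hr_S) (auto simp: S_simps)
    have e2: "hr E (Conj (Neg \<phi>) (Neg Bot)) = hr E (Neg \<phi>)"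
      by (rule hr_S) (auto simp: S_simps)
    show ?thesis
      using True
      by (simp add: pref_seq_def nmc_def RR_def rank_UE_cons[OF assms True] e1 e2 hr_Disj
          enat_aux)
        (cases "hr E (Neg \<theta>)"; cases "hr E (Neg \<phi>)"; auto simp: min_def)
  qed
qed

lemma RR_E:
  fixes E :: "('v::finite) form set"
  shows "E_relation (RR E)"
  unfolding E_relation_def
proof (intro conjI allI impI)
  fix \<theta> \<phi> \<psi> :: "'v form" assume "RR E \<theta> \<phi> \<and> RR E \<phi> \<psi>"
  then show "RR E \<theta> \<psi>" by (auto simp: RR_def)
next
  fix \<theta> \<phi> :: "'v form" assume "entails {\<theta>} \<phi>"
  then have "S (Neg \<phi>) \<subseteq> S (Neg \<theta>)" by (auto simp: entails_def S_simps)
  then show "RR E \<theta> \<phi>" unfolding RR_def hr_def by (auto intro: INF_superset_mono)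
next
  fix \<theta> \<phi> :: "'v form"
  have "S (Neg (Conj \<theta> \<phi>)) = S (Disj (Neg \<theta>) (Neg \<phi>))" by (auto simp: S_simps)
  then have "hr E (Neg (Conj \<theta> \<phi>)) = min (hr E (Neg \<theta>)) (hr E (Neg \<phi>))"
    using hr_S hr_Disj by metis
  then show "RR E \<theta> (Conj \<theta> \<phi>) \<or> RR E \<phi> (Conj \<theta> \<phi>)"
    by (auto simp: RR_def min_def)
next
  fix \<phi> :: "'v form"
  assume ex: "\<exists>\<psi>. strict (RR E) Bot \<psi>" and all: "\<forall>\<theta>. RR E \<theta> \<phi>"
  have c: "consistent E" using ex by (auto simp: strict_def RR_def)
  have "hr E (Neg Top) = \<infinity>" by (simp add: hr_inf S_simps)
  then have "hr E (Neg \<phi>) = \<infinity>" using all c by (metis RR_def enat_ord_simps(5))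
  then have "S (Neg \<phi>) = {}" by (simp add: hr_inf)
  then show "valid \<phi>" by (auto simp: valid_def entails_def S_simps)
qed

theorem proposition8:
  fixes E :: "('v::finite) form set"
  assumes "finite E"
  shows "(entails E Bot \<longrightarrow> empty_seq (UE E))
       \<and> (\<not> entails E Bot \<longrightarrow> full_seq (UE E))
       \<and> UE E \<in> Upsilon
       \<and> pref_gen E = pref_seq (UE E)
       \<and> E_relation (pref_gen E)"
proof -
  have emp: "entails E Bot \<longrightarrow> empty_seq (UE E)"
    by (auto simp: empty_seq_def UE_def consistent_def)
  have full: "\<not> entails E Bot \<longrightarrow> full_seq (UE E)"
  proof
    assume "\<not> entails E Bot"
    then have c: "consistent E" by (simp add: consistent_def)
    have "w \<in> \<Union> (set (UE E))" for w
      using mem_UE[OF assms c idx_le[OF assms], of w] idx_le[OF assms, of w]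
      by (metis UnionI len_UE nth_mem)
    then show "full_seq (UE E)" by (auto simp: full_seq_def)
  qed
  have sq: "is_seq (UE E)"
    unfolding is_seq_def
  proof (intro conjI allI impI)
    show "UE E \<noteq> []" by (simp add: UE_def)
    fix i j assume ij: "i < length (UE E)" "j < length (UE E)" "i \<noteq> j"
    show "UE E ! i \<inter> UE E ! j = {}"
      using ij by (auto simp: UE_nth len_UE)
  qed
  have ups: "UE E \<in> Upsilon"
    using emp full sq by (auto simp: Upsilon_def)
  show ?thesis
    using emp full ups pref_gen_RR[OF assms] pref_seq_RR[OF assms] RR_E[of E] by simp
qed

end
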